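(* Let $N\ge 2$, let $\Omega\subset\mathbb{R}^N$ be a domain with $\overline{\Omega}$ compact, and let $\Omega_1\subset\Omega$ be an open subdomain whose boundary $\Gamma=\partial\Omega_1$ is a closed connected $C^2$ hypersurface contained in $\Omega$, with $\Omega_2=\Omega\setminus\overline{\Omega}_1$. Let $b_1,b_2>0$, $b=b_1$ on $\overline{\Omega}_1$, $b=b_2$ on $\Omega_2$, and $0<c_0<c_1$. Define $$\varphi(z)=\begin{cases}\frac{c_0-z}{c_1-z}, & z\le c_0,\\ 0, & z>c_0,\end{cases}\qquad F(s)=\begin{cases} s+(c_1-c_0)\log\frac{c_1-s}{c_1}, & s\le c_0,\\ c_0+(c_1-c_0)\log\frac{c_1-c_0}{c_1}, & s>c_0,\end{cases}$$ and $E:V\to\mathbb{R}$, $V=H^1_0(\Omega)$, by $E(u)=\int_\Omega \tfrac12 b|\nabla u|^2\,dx-\int_{\Omega_1}F(u)\,dx$, whose Fréchet derivative is $E'(u)[h]=\int_\Omega b\nabla u\cdot\nabla h\,dx-\int_{\Omega_1}\varphi(u)h\,dx$. Then $E'$ is strongly monotone: for all $u,v\in V$ there exists $\gamma>0$ such that $$(E'(u)-E'(v))[u-v]\ge \gamma\|u-v\|_V^2.$$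
   Context: $V=H^1_0(\Omega)$ carries the norm induced by the inner product $(u,v)_V=(u,v)_{L^2}+(\nabla u,\nabla v)_{L^2}$. *)

theory Defs
  imports "HOL-Analysis.Analysis"
begin

definition pd :: "'a::euclidean_space \<Rightarrow> ('a \<Rightarrow> real) \<Rightarrow> 'a \<Rightarrow> real" where
  "pd i f = (\<lambda>x. frechet_derivative f (at x) i)"

primrec pds :: "'a::euclidean_space list \<Rightarrow> ('a \<Rightarrow> real) \<Rightarrow> 'a \<Rightarrow> real" where
  "pds [] f = f"
| "pds (i # is) f = pd i (pds is f)"

definition cgrad :: "('a::euclidean_space \<Rightarrow> real) \<Rightarrow> 'a \<Rightarrow> 'a" where
  "cgrad f = (\<lambda>x. \<Sum>i\<in>Basis. pd i f x *\<^sub>R i)"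

(* test functions C_c^\<infinity>(\<Omega>) (extended by zero to the whole space) *)
definition test_fun :: "'a::euclidean_space set \<Rightarrow> ('a \<Rightarrow> real) \<Rightarrow> bool" where
  "test_fun \<Omega> \<psi> \<longleftrightarrow>
     (\<forall>ds. set ds \<subseteq> Basis \<longrightarrow> (\<forall>x. pds ds \<psi> differentiable (at x))) \<and>
     compact (closure {x. \<psi> x \<noteq> 0}) \<and> closure {x. \<psi> x \<noteq> 0} \<subseteq> \<Omega>"

definition L2 :: "'a::euclidean_space set \<Rightarrow> ('a \<Rightarrow> real) \<Rightarrow> bool" where
  "L2 \<Omega> f \<longleftrightarrow> set_borel_measurable lebesgue \<Omega> f \<and>
                 set_integrable lebesgue \<Omega> (\<lambda>x. (f x)\<^sup>2)"

definition L2vec :: "'a::euclidean_space set \<Rightarrow> ('a \<Rightarrow> 'a) \<Rightarrow> bool" where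
  "L2vec \<Omega> g \<longleftrightarrow> set_borel_measurable lebesgue \<Omega> g \<and>
                 set_integrable lebesgue \<Omega> (\<lambda>x. (norm (g x))\<^sup>2)"

definition weak_grad :: "'a::euclidean_space set \<Rightarrow> ('a \<Rightarrow> real) \<Rightarrow> ('a \<Rightarrow> 'a) \<Rightarrow> bool" where
  "weak_grad \<Omega> u g \<longleftrightarrow>
     (\<forall>\<psi>. test_fun \<Omega> \<psi> \<longrightarrow>
        (\<forall>i\<in>Basis. (LINT x:\<Omega>|lebesgue. u x * pd i \<psi> x)
                   = - (LINT x:\<Omega>|lebesgue. (g x \<bullet> i) * \<psi> x)))"

definition H1 :: "'a::euclidean_space set \<Rightarrow> ('a \<Rightarrow> real) \<Rightarrow> ('a \<Rightarrow> 'a) \<Rightarrow> bool" where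
  "H1 \<Omega> u g \<longleftrightarrow> L2 \<Omega> u \<and> L2vec \<Omega> g \<and> weak_grad \<Omega> u g"

definition Vnorm_sq :: "'a::euclidean_space set \<Rightarrow> ('a \<Rightarrow> real) \<Rightarrow> ('a \<Rightarrow> 'a) \<Rightarrow> real" where
  "Vnorm_sq \<Omega> u g = (LINT x:\<Omega>|lebesgue. (u x)\<^sup>2) + (LINT x:\<Omega>|lebesgue. (norm (g x))\<^sup>2)"

definition H10 :: "'a::euclidean_space set \<Rightarrow> ('a \<Rightarrow> real) \<Rightarrow> ('a \<Rightarrow> 'a) \<Rightarrow> bool" where
  "H10 \<Omega> u g \<longleftrightarrow> H1 \<Omega> u g \<and>
     (\<exists>\<psi>s. (\<forall>n. test_fun \<Omega> (\<psi>s n)) \<and>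
        (\<lambda>n. Vnorm_sq \<Omega> (\<lambda>x. \<psi>s n x - u x) (\<lambda>x. cgrad (\<psi>s n) x - g x)) \<longlonglongrightarrow> 0)"

(* closed (compact, boundaryless) connected C^2 hypersurface:
   compact, connected, locally the regular zero set of a C^2 function *)
definition C2_closed_hypersurface :: "'a::euclidean_space set \<Rightarrow> bool" where
  "C2_closed_hypersurface \<Gamma> \<longleftrightarrow> compact \<Gamma> \<and> connected \<Gamma> \<and> \<Gamma> \<noteq> {} \<and>
     (\<forall>x\<in>\<Gamma>. \<exists>U f g H. open U \<and> x \<in> U \<and>
        (\<forall>y\<in>U. (f has_derivative (\<lambda>h. g y \<bullet> h)) (at y) \<and>
                (g has_derivative blinfun_apply (H y)) (at y) \<and> g y \<noteq> 0) \<and>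
        continuous_on U (H :: 'a \<Rightarrow> 'a \<Rightarrow>\<^sub>L 'a) \<and>
        \<Gamma> \<inter> U = {y\<in>U. f y = (0::real)})"

definition phi :: "real \<Rightarrow> real \<Rightarrow> real \<Rightarrow> real" where
  "phi c0 c1 z = (if z \<le> c0 then (c0 - z) / (c1 - z) else 0)"

definition Fpot :: "real \<Rightarrow> real \<Rightarrow> real \<Rightarrow> real" where
  "Fpot c0 c1 s = (if s \<le> c0 then s + (c1 - c0) * ln ((c1 - s) / c1)
                   else c0 + (c1 - c0) * ln ((c1 - c0) / c1))"

definition coeff_b :: "'a::euclidean_space set \<Rightarrow> real \<Rightarrow> real \<Rightarrow> 'a \<Rightarrow> real" where
  "coeff_b \<Omega>1 b1 b2 x = (if x \<in> closure \<Omega>1 then b1 else b2)"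

definition Ederiv ::
  "'a::euclidean_space set \<Rightarrow> 'a set \<Rightarrow> ('a \<Rightarrow> real) \<Rightarrow> real \<Rightarrow> real \<Rightarrow>
   ('a \<Rightarrow> real) \<Rightarrow> ('a \<Rightarrow> 'a) \<Rightarrow> ('a \<Rightarrow> real) \<Rightarrow> ('a \<Rightarrow> 'a) \<Rightarrow> real" where
  "Ederiv \<Omega> \<Omega>1 b c0 c1 u gu h gh =
     (LINT x:\<Omega>|lebesgue. b x * (gu x \<bullet> gh x)) - (LINT x:\<Omega>1|lebesgue. phi c0 c1 (u x) * h x)"

end

theory Submission
  imports Defs
begin

definition smoothB :: "('a::euclidean_space \<Rightarrow> real) \<Rightarrow> bool" where
  "smoothB f \<longleftrightarrow> (\<forall>ds. set ds \<subseteq> Basis \<longrightarrow> (\<forall>x. pds ds f differentiable (at x)))"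

lemma pd_lin:
  assumes "f differentiable (at x)" "g differentiable (at x)"
  shows "pd i (\<lambda>y. f y + c * g y) x = pd i f x + c * pd i g x"
proof -
  have df: "(f has_derivative frechet_derivative f (at x)) (at x)" using assms(1) frechet_derivative_works by blast
  have dg: "(g has_derivative frechet_derivative g (at x)) (at x)" using assms(2) frechet_derivative_works by blast
  have "((\<lambda>y. f y + c * g y) has_derivative (\<lambda>h. frechet_derivative f (at x) h + c * frechet_derivative g (at x) h)) (at x)"
    by (rule has_derivative_add[OF df has_derivative_mult_right[OF dg]])
  from frechet_derivative_at[OF this] show ?thesis unfolding pd_def by (simp add: fun_eq_iff)
qed

lemma pds_lin:
  assumes "\<And>is x. set is \<subseteq> Basis \<Longrightarrow> length is < length ds \<Longrightarrow> pds is f differentiable (at x) \<and> pds is g differentiable (at x)"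
    and "set ds \<subseteq> Basis"
  shows "pds ds (\<lambda>y. f y + c * g y) = (\<lambda>y. pds ds f y + c * pds ds g y)"
  using assms
proof (induction ds)
  case Nil
  then show ?case by simp
next
  case (Cons i ds)
  have IH: "pds ds (\<lambda>y. f y + c * g y) = (\<lambda>y. pds ds f y + c * pds ds g y)"
    using Cons by force
  show ?case
    using Cons.prems(1)[of ds] Cons.prems(2) by (auto simp: IH intro!: ext pd_lin)
qed

lemma smoothB_lin:
  assumes "smoothB f" "smoothB g"
  shows "smoothB (\<lambda>y. f y + c * g y)"
  unfolding smoothB_def
proof (intro allI impI)
  fix ds x assume ds: "set (ds::'a list) \<subseteq> Basis"
  have eq: "pds ds (\<lambda>y. f y + c * g y) = (\<lambda>y. pds ds f y + c * pds ds g y)"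
    by (rule pds_lin) (use assms ds in \<open>auto simp: smoothB_def\<close>)
  have "(\<lambda>y. pds ds f y + c * pds ds g y) differentiable (at x)"
    using assms ds unfolding smoothB_def by (intro differentiable_add differentiable_mult differentiable_const) blast+
  then show "pds ds (\<lambda>y. f y + c * g y) differentiable (at x)" unfolding eq .
qed

lemma pd_mult:
  assumes "f differentiable (at x)"
  shows "pd i (\<lambda>y. (y \<bullet> e) * f y) x = (i \<bullet> e) * f x + (x \<bullet> e) * pd i f x"
proof -
  have df: "(f has_derivative frechet_derivative f (at x)) (at x)" using assms(1) frechet_derivative_works by blast
  have "((\<lambda>y. (y \<bullet> e) * f y) has_derivative (\<lambda>h. (x \<bullet> e) * frechet_derivative f (at x) h + (h \<bullet> e) * f x)) (at x)"
    by (rule has_derivative_mult[OF has_derivative_inner_left[OF has_derivative_ident] df])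
  from frechet_derivative_at[OF this] show ?thesis unfolding pd_def by (simp add: fun_eq_iff add.commute)
qed

lemma pds_snoc: "pds (ds @ [i]) f = pds ds (pd i f)"
  by (induction ds) auto

lemma smoothB_pd: "smoothB f \<Longrightarrow> i \<in> Basis \<Longrightarrow> smoothB (pd i f)"
  unfolding smoothB_def by (metis pds_snoc set_append Un_subset_iff empty_subsetI insert_subset list.set(1) list.set(2))

lemma smoothB_mult_aux:
  "\<forall>f ds. smoothB f \<longrightarrow> set ds \<subseteq> Basis \<longrightarrow> length ds \<le> n \<longrightarrow>
      (\<forall>x. pds ds (\<lambda>y. (y \<bullet> e) * f y) differentiable (at x))"
proof (induction n)
  case 0
  show ?case
  proof (intro allI impI)
    fix f :: "'a \<Rightarrow> real" and ds :: "'a list" and x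
    assume "smoothB f" "length ds \<le> 0"
    then have "ds = []" "f differentiable (at x)" unfolding smoothB_def by (auto dest: spec[of _ "[]"])
    moreover have "(\<lambda>y. y \<bullet> e) differentiable (at x)"
      unfolding differentiable_def using has_derivative_inner_left[OF has_derivative_ident] by blast
    ultimately show "pds ds (\<lambda>y. (y \<bullet> e) * f y) differentiable (at x)"
      by (simp add: differentiable_mult)
  qed
next
  case (Suc n)
  show ?case
  proof (intro allI impI)
    fix f :: "'a \<Rightarrow> real" and ds :: "'a list" and x
    assume f: "smoothB f" and ds: "set ds \<subseteq> Basis" and len: "length ds \<le> Suc n"
    show "pds ds (\<lambda>y. (y \<bullet> e) * f y) differentiable (at x)"
    proof (cases "length ds \<le> n")
      case True
      then show ?thesis using Suc.IH f ds by blast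
    next
      case False
      then obtain ds' i where dsi: "ds = ds' @ [i]"
        by (metis le0 length_0_conv rev_exhaust)
      have len': "length ds' = n" using dsi len False by simp
      have i: "i \<in> Basis" "set ds' \<subseteq> Basis" using ds dsi by auto
      have fd: "\<And>x. f differentiable (at x)" using f unfolding smoothB_def by (metis empty_subsetI list.set(1) pds.simps(1))
      have pdm: "pd i (\<lambda>y. (y \<bullet> e) * f y) = (\<lambda>y. (y \<bullet> e) * pd i f y + (i \<bullet> e) * f y)"
        using pd_mult[OF fd] by (auto intro!: ext simp: add.commute)
      have sf: "smoothB (pd i f)" using smoothB_pd[OF f i(1)] .
      have IHf: "\<And>is x. set is \<subseteq> Basis \<Longrightarrow> length is \<le> n \<Longrightarrow> pds is (\<lambda>y. (y \<bullet> e) * pd i f y) differentiable (at x)"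
        using Suc.IH sf by blast
      have fD: "\<And>is x. set is \<subseteq> Basis \<Longrightarrow> pds is f differentiable (at x)"
        using f unfolding smoothB_def by blast
      have lin: "pds ds' (\<lambda>y. (y \<bullet> e) * pd i f y + (i \<bullet> e) * f y)
          = (\<lambda>y. pds ds' (\<lambda>y. (y \<bullet> e) * pd i f y) y + (i \<bullet> e) * pds ds' f y)"
      proof (rule pds_lin[OF _ i(2)])
        fix "is" :: "'a list" and x assume "set is \<subseteq> Basis" "length is < length ds'"
        then show "pds is (\<lambda>y. (y \<bullet> e) * pd i f y) differentiable (at x) \<and> pds is f differentiable (at x)"
          using IHf fD len' by simp
      qed
      have "pds ds' (\<lambda>y. (y \<bullet> e) * pd i f y) differentiable (at x)"
        using IHf i(2) len' by simp
      moreover have "pds ds' f differentiable (at x)" using fD i(2) by simp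
      ultimately show ?thesis
        unfolding dsi pds_snoc pdm lin by (intro differentiable_add differentiable_mult differentiable_const)
    qed
  qed
qed

lemma smoothB_mult: assumes "smoothB f" shows "smoothB (\<lambda>y. (y \<bullet> e) * f y)"
  unfolding smoothB_def
proof (intro allI impI)
  fix ds :: "'a list" and x assume "set ds \<subseteq> Basis"
  then show "pds ds (\<lambda>y. (y \<bullet> e) * f y) differentiable (at x)"
    using smoothB_mult_aux[of "length ds" e] assms by blast
qed

lemma test_fun_mult:
  assumes "test_fun S f" shows "test_fun S (\<lambda>y. (y \<bullet> e) * f y)"
proof -
  have sm: "smoothB f" using assms unfolding test_fun_def smoothB_def by blast
  have sub: "closure {x. (x \<bullet> e) * f x \<noteq> 0} \<subseteq> closure {x. f x \<noteq> 0}"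
    by (rule closure_mono) auto
  have c: "compact (closure {x. f x \<noteq> 0})" and s: "closure {x. f x \<noteq> 0} \<subseteq> S"
    using assms unfolding test_fun_def by auto
  have C: "compact (closure {x. (x \<bullet> e) * f x \<noteq> 0})"
    using c sub by (metis bounded_subset closed_closure compact_eq_bounded_closed)
  have D: "closure {x. (x \<bullet> e) * f x \<noteq> 0} \<subseteq> S" using sub s by (rule order_trans)
  have E: "\<forall>ds. set ds \<subseteq> Basis \<longrightarrow> (\<forall>x. pds ds (\<lambda>y. (y \<bullet> e) * f y) differentiable (at x))"
    using smoothB_mult[OF sm] unfolding smoothB_def .
  show ?thesis unfolding test_fun_def using C D E by (intro conjI)
qed

lemma b2l: "f \<in> borel_measurable borel \<Longrightarrow> f \<in> borel_measurable lebesgue"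
  by (rule measurable_completion) simp

lemma open_leb: "open S \<Longrightarrow> (S::'a::euclidean_space set) \<in> sets lebesgue"
  by (simp add: borel_open sets_completionI_sets)

lemma closed_leb: "closed S \<Longrightarrow> (S::'a::euclidean_space set) \<in> sets lebesgue"
  by (simp add: borel_closed sets_completionI_sets)

lemma sbm_cont:
  fixes f :: "'a::euclidean_space \<Rightarrow> 'b::euclidean_space"
  assumes "continuous_on UNIV f" "S \<in> sets lebesgue"
  shows "set_borel_measurable lebesgue S f"
  unfolding set_borel_measurable_def
  using assms by (intro borel_measurable_scaleR borel_measurable_indicator b2l borel_measurable_continuous_onI)

lemma sbm_mult:
  fixes f g :: "'a::euclidean_space \<Rightarrow> real"
  assumes "set_borel_measurable lebesgue S f" "set_borel_measurable lebesgue S g"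
  shows "set_borel_measurable lebesgue S (\<lambda>x. f x * g x)"
proof -
  have eq: "(\<lambda>x. indicator S x *\<^sub>R (f x * g x)) = (\<lambda>x. (indicator S x *\<^sub>R f x) * (indicator S x *\<^sub>R g x))"
    by (auto simp: indicator_def)
  have "(\<lambda>x. (indicator S x *\<^sub>R f x) * (indicator S x *\<^sub>R g x)) \<in> borel_measurable lebesgue"
    using assms unfolding set_borel_measurable_def by (rule borel_measurable_times)
  then show ?thesis unfolding set_borel_measurable_def eq .
qed

lemma sbm_lin:
  fixes f g :: "'a::euclidean_space \<Rightarrow> 'b::euclidean_space"
  assumes "set_borel_measurable lebesgue S f" "set_borel_measurable lebesgue S g"
  shows "set_borel_measurable lebesgue S (\<lambda>x. f x + c *\<^sub>R g x)"
proof -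
  have eq: "(\<lambda>x. indicator S x *\<^sub>R (f x + c *\<^sub>R g x)) = (\<lambda>x. (indicator S x *\<^sub>R f x) + c *\<^sub>R (indicator S x *\<^sub>R g x))"
    by (auto simp: indicator_def)
  have "(\<lambda>x. (indicator S x *\<^sub>R f x) + c *\<^sub>R (indicator S x *\<^sub>R g x)) \<in> borel_measurable lebesgue"
    using assms unfolding set_borel_measurable_def by (intro borel_measurable_add[OF _ borel_measurable_scaleR[OF borel_measurable_const]])
  then show ?thesis unfolding set_borel_measurable_def eq .
qed

lemma sbm_diff:
  fixes f g :: "'a::euclidean_space \<Rightarrow> 'b::euclidean_space"
  assumes "set_borel_measurable lebesgue S f" "set_borel_measurable lebesgue S g"
  shows "set_borel_measurable lebesgue S (\<lambda>x. f x - g x)"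
  using sbm_lin[OF assms, of "-1"] by simp

lemma sbm_inner:
  fixes f g :: "'a::euclidean_space \<Rightarrow> 'b::euclidean_space"
  assumes "set_borel_measurable lebesgue S f" "set_borel_measurable lebesgue S g"
  shows "set_borel_measurable lebesgue S (\<lambda>x. f x \<bullet> g x)"
proof -
  have eq: "(\<lambda>x. indicator S x *\<^sub>R (f x \<bullet> g x)) = (\<lambda>x. (indicator S x *\<^sub>R f x) \<bullet> (indicator S x *\<^sub>R g x))"
    by (auto simp: indicator_def)
  have "(\<lambda>x. (indicator S x *\<^sub>R f x) \<bullet> (indicator S x *\<^sub>R g x)) \<in> borel_measurable lebesgue"
    using assms unfolding set_borel_measurable_def by (rule borel_measurable_inner)
  then show ?thesis unfolding set_borel_measurable_def eq .
qed

lemma sbm_const: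
  assumes "S \<in> sets lebesgue"
  shows "set_borel_measurable lebesgue S (\<lambda>x. c::'b::euclidean_space)"
  by (rule sbm_cont) (auto simp: assms)

lemma sbm_comp:
  fixes f :: "'a::euclidean_space \<Rightarrow> real" and h :: "real \<Rightarrow> real"
  assumes "set_borel_measurable lebesgue S f" "h \<in> borel_measurable borel" "S \<in> sets lebesgue"
  shows "set_borel_measurable lebesgue S (\<lambda>x. h (f x))"
proof -
  have eq: "(\<lambda>x. indicator S x *\<^sub>R h (f x)) = (\<lambda>x. indicator S x *\<^sub>R h (indicator S x *\<^sub>R f x))"
    by (rule ext) (auto split: split_indicator)
  have "(\<lambda>x. h (indicator S x *\<^sub>R f x)) \<in> borel_measurable lebesgue"
    using assms(1,2) unfolding set_borel_measurable_def by (rule measurable_compose)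
  moreover have "indicator S \<in> borel_measurable lebesgue"
    using assms(3) by simp
  ultimately have "(\<lambda>x. indicator S x *\<^sub>R h (indicator S x *\<^sub>R f x)) \<in> borel_measurable lebesgue"
    by (intro borel_measurable_scaleR)
  then show ?thesis unfolding set_borel_measurable_def eq .
qed

lemma sq_bound: "\<bar>a * b\<bar> \<le> a\<^sup>2 + (b::real)\<^sup>2"
proof -
  have "0 \<le> (\<bar>a\<bar> - \<bar>b\<bar>)\<^sup>2" by simp
  then have "2 * (\<bar>a\<bar> * \<bar>b\<bar>) \<le> a\<^sup>2 + b\<^sup>2" by (simp add: power2_eq_square algebra_simps)
  moreover have "0 \<le> \<bar>a\<bar> * \<bar>b\<bar>" by simp
  ultimately show ?thesis unfolding abs_mult by linarith
qed

lemma set_int_nonneg: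
  fixes f :: "'a \<Rightarrow> real"
  assumes "\<And>x. x \<in> S \<Longrightarrow> 0 \<le> f x"
  shows "0 \<le> (LINT x:S|M. f x)"
  unfolding set_lebesgue_integral_def by (rule Bochner_Integration.integral_nonneg) (auto simp: assms split: split_indicator)

lemma L2_prod_int:
  assumes "L2 S f" "L2 S g"
  shows "set_integrable lebesgue S (\<lambda>x. f x * g x)"
proof (rule set_integrable_bound[of _ _ "\<lambda>x. (f x)\<^sup>2 + (g x)\<^sup>2"])
  show "set_integrable lebesgue S (\<lambda>x. (f x)\<^sup>2 + (g x)\<^sup>2)"
    using assms unfolding L2_def by (intro set_integral_add(1)) auto
  show "set_borel_measurable lebesgue S (\<lambda>x. f x * g x)"
    using assms unfolding L2_def by (intro sbm_mult) auto
  show "AE x in lebesgue. x \<in> S \<longrightarrow> norm (f x * g x) \<le> norm ((f x)\<^sup>2 + (g x)\<^sup>2)"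
    using sq_bound by (intro AE_I2) auto
qed

lemma L2_lin:
  assumes "L2 S f" "L2 S g"
  shows "L2 S (\<lambda>x. f x + c * g x)"
  unfolding L2_def
proof
  show "set_borel_measurable lebesgue S (\<lambda>x. f x + c * g x)"
    using sbm_lin[of S f g c] assms unfolding L2_def by simp
  have "set_integrable lebesgue S (\<lambda>x. (f x)\<^sup>2 + (2 * c) * (f x * g x) + c\<^sup>2 * (g x)\<^sup>2)"
    using assms L2_prod_int[OF assms] unfolding L2_def
    by (intro set_integral_add(1) set_integrable_mult_right) auto
  moreover have "(\<lambda>x. (f x)\<^sup>2 + (2 * c) * (f x * g x) + c\<^sup>2 * (g x)\<^sup>2) = (\<lambda>x. (f x + c * g x)\<^sup>2)"
    by (rule ext) (simp add: power2_eq_square algebra_simps)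
  ultimately show "set_integrable lebesgue S (\<lambda>x. (f x + c * g x)\<^sup>2)" by simp
qed

lemma L2_diff:
  assumes "L2 S f" "L2 S g"
  shows "L2 S (\<lambda>x. f x - g x)"
  using L2_lin[OF assms, of "-1"] by simp

lemma L2_bdd:
  assumes "S \<in> lmeasurable" "set_borel_measurable lebesgue S f" "\<And>x. x \<in> S \<Longrightarrow> \<bar>f x\<bar> \<le> B"
  shows "L2 S f"
  unfolding L2_def
proof
  show "set_borel_measurable lebesgue S f" by fact
  show "set_integrable lebesgue S (\<lambda>x. (f x)\<^sup>2)"
  proof (rule set_integrable_bound[of _ _ "\<lambda>x. B\<^sup>2"])
    show "set_integrable lebesgue S (\<lambda>x. B\<^sup>2)"
      using assms(1) by (rule absolutely_integrable_on_const)
    show "set_borel_measurable lebesgue S (\<lambda>x. (f x)\<^sup>2)"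
      using sbm_mult[OF assms(2) assms(2)] by (simp add: power2_eq_square)
    show "AE x in lebesgue. x \<in> S \<longrightarrow> norm ((f x)\<^sup>2) \<le> norm (B\<^sup>2)"
    proof (intro AE_I2 impI)
      fix x assume "x \<in> S"
      then have "\<bar>f x\<bar> \<le> B" by (rule assms(3))
      then have "\<bar>f x\<bar>\<^sup>2 \<le> B\<^sup>2" by (intro power_mono) auto
      then show "norm ((f x)\<^sup>2) \<le> norm (B\<^sup>2)" by simp
    qed
  qed
qed

lemma cont_bound:
  fixes f :: "'a::euclidean_space \<Rightarrow> 'b::euclidean_space"
  assumes "continuous_on UNIV f" "bounded S"
  obtains B where "\<And>x. x \<in> S \<Longrightarrow> norm (f x) \<le> B"
proof -
  have "compact (closure S)" using assms(2) by (simp add: compact_closure)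
  then have "compact (f ` closure S)" using assms(1) by (meson compact_continuous_image continuous_on_subset top_greatest)
  then have "bounded (f ` closure S)" by (rule compact_imp_bounded)
  then obtain B where "\<And>y. y \<in> f ` closure S \<Longrightarrow> norm y \<le> B" by (meson bounded_iff)
  then show ?thesis using that closure_subset by blast
qed

lemma L2_cont:
  fixes f :: "'a::euclidean_space \<Rightarrow> real"
  assumes "continuous_on UNIV f" "bounded S" "S \<in> lmeasurable"
  shows "L2 S f"
proof -
  obtain B where B: "\<And>x. x \<in> S \<Longrightarrow> norm (f x) \<le> B" using cont_bound[OF assms(1,2)] by blast
  show ?thesis
    by (rule L2_bdd[OF assms(3) sbm_cont[OF assms(1)], of B]) (use assms(3) B in auto)
qed

lemma sbm_normsq:
  fixes h :: "'a::euclidean_space \<Rightarrow> 'b::euclidean_space"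
  assumes "set_borel_measurable lebesgue S h"
  shows "set_borel_measurable lebesgue S (\<lambda>x. (norm (h x))\<^sup>2)"
  using sbm_inner[OF assms assms] by (simp add: power2_norm_eq_inner)

lemma L2vec_inner:
  fixes g :: "'a::euclidean_space \<Rightarrow> 'a"
  assumes "L2vec S g" "e \<in> Basis" "S \<in> sets lebesgue"
  shows "L2 S (\<lambda>x. g x \<bullet> e)"
  unfolding L2_def
proof
  show m: "set_borel_measurable lebesgue S (\<lambda>x. g x \<bullet> e)"
    using assms unfolding L2vec_def by (intro sbm_inner sbm_const) auto
  show "set_integrable lebesgue S (\<lambda>x. (g x \<bullet> e)\<^sup>2)"
  proof (rule set_integrable_bound[of _ _ "\<lambda>x. (norm (g x))\<^sup>2"])
    show "set_integrable lebesgue S (\<lambda>x. (norm (g x))\<^sup>2)" using assms unfolding L2vec_def by auto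
    show "set_borel_measurable lebesgue S (\<lambda>x. (g x \<bullet> e)\<^sup>2)"
      using sbm_mult[OF m m] by (simp add: power2_eq_square)
    show "AE x in lebesgue. x \<in> S \<longrightarrow> norm ((g x \<bullet> e)\<^sup>2) \<le> norm ((norm (g x))\<^sup>2)"
    proof (intro AE_I2 impI)
      fix x
      have "\<bar>g x \<bullet> e\<bar>\<^sup>2 \<le> (norm (g x))\<^sup>2" using Basis_le_norm[OF assms(2), of "g x"] by (intro power_mono) auto
      then show "norm ((g x \<bullet> e)\<^sup>2) \<le> norm ((norm (g x))\<^sup>2)" by simp
    qed
  qed
qed

lemma quad_disc:
  fixes A B C :: real
  assumes "\<And>t. 0 \<le> A + 2 * t * B + t\<^sup>2 * C" "0 \<le> C"
  shows "B\<^sup>2 \<le> A * C"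
proof (cases "C = 0")
  case True
  have "B = 0"
  proof (rule ccontr)
    assume "B \<noteq> 0"
    have "0 \<le> A + 2 * (- (A + 1) / (2 * B)) * B" using assms(1)[of "- (A + 1) / (2 * B)"] True by simp
    also have "\<dots> = -1" using \<open>B \<noteq> 0\<close> by (simp add: field_simps)
    finally show False by simp
  qed
  then show ?thesis using True by simp
next
  case False
  then have C: "C > 0" using assms(2) by simp
  have "0 \<le> A + 2 * (- B / C) * B + (- B / C)\<^sup>2 * C" by (rule assms(1))
  also have "\<dots> = (A * C - B\<^sup>2) / C" using C by (simp add: field_simps power2_eq_square)
  finally show ?thesis using C by (simp add: zero_le_divide_iff)
qed

lemma CS:
  assumes "L2 S f" "L2 S g"
  shows "(LINT x:S|lebesgue. f x * g x)\<^sup>2 \<le> (LINT x:S|lebesgue. (f x)\<^sup>2) * (LINT x:S|lebesgue. (g x)\<^sup>2)"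
proof (rule quad_disc)
  have i1: "set_integrable lebesgue S (\<lambda>x. (f x)\<^sup>2)" and i3: "set_integrable lebesgue S (\<lambda>x. (g x)\<^sup>2)"
    using assms unfolding L2_def by auto
  have i2: "set_integrable lebesgue S (\<lambda>x. f x * g x)" by (rule L2_prod_int[OF assms])
  fix t :: real
  have "0 \<le> (LINT x:S|lebesgue. (f x + t * g x)\<^sup>2)" by (rule set_int_nonneg) simp
  also have "(LINT x:S|lebesgue. (f x + t * g x)\<^sup>2)
      = (LINT x:S|lebesgue. (f x)\<^sup>2 + ((2 * t) * (f x * g x) + t\<^sup>2 * (g x)\<^sup>2))"
    by (rule arg_cong[where f="set_lebesgue_integral lebesgue S"], rule ext) (simp add: power2_eq_square algebra_simps)
  also have "\<dots> = (LINT x:S|lebesgue. (f x)\<^sup>2) + 2 * t * (LINT x:S|lebesgue. f x * g x) + t\<^sup>2 * (LINT x:S|lebesgue. (g x)\<^sup>2)"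
    using i1 i2 i3 by (simp add: set_integral_add set_integrable_mult_right)
  finally show "0 \<le> (LINT x:S|lebesgue. (f x)\<^sup>2) + 2 * t * (LINT x:S|lebesgue. f x * g x) + t\<^sup>2 * (LINT x:S|lebesgue. (g x)\<^sup>2)" .
next
  show "0 \<le> (LINT x:S|lebesgue. (g x)\<^sup>2)" by (rule set_int_nonneg) simp
qed

lemma L2_subset:
  assumes "L2 S f" "T \<subseteq> S" "T \<in> sets lebesgue"
  shows "L2 T f"
  unfolding L2_def
proof
  have eq: "(\<lambda>x. indicator T x *\<^sub>R f x) = (\<lambda>x. indicator T x * (indicator S x *\<^sub>R f x))"
    using assms(2) by (intro ext) (auto split: split_indicator)
  have m1: "(\<lambda>x. indicator S x *\<^sub>R f x) \<in> borel_measurable lebesgue"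
    using assms(1) unfolding L2_def set_borel_measurable_def by blast
  have m2: "(indicator T :: 'a \<Rightarrow> real) \<in> borel_measurable lebesgue" using assms(3) by simp
  have "(\<lambda>x. indicator T x * (indicator S x *\<^sub>R f x)) \<in> borel_measurable lebesgue"
    by (rule borel_measurable_times[OF m2 m1])
  then show "set_borel_measurable lebesgue T f" unfolding set_borel_measurable_def eq .
  show "set_integrable lebesgue T (\<lambda>x. (f x)\<^sup>2)"
    using assms(1) unfolding L2_def by (intro set_integrable_subset[OF _ assms(3) assms(2)]) blast
qed

lemma L2_mult_cont:
  assumes "L2 S f" "continuous_on UNIV h" "bounded S" "S \<in> sets lebesgue"
  shows "L2 S (\<lambda>x. h x * f x)"
proof -
  obtain B where B: "\<And>x. x \<in> S \<Longrightarrow> norm (h x) \<le> B" using cont_bound[OF assms(2,3)] by blast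
  show ?thesis unfolding L2_def
  proof
    have mh: "set_borel_measurable lebesgue S h" using sbm_cont[OF assms(2,4)] .
    have mf: "set_borel_measurable lebesgue S f" using assms(1) unfolding L2_def by auto
    show m: "set_borel_measurable lebesgue S (\<lambda>x. h x * f x)" using sbm_mult[OF mh mf] .
    show "set_integrable lebesgue S (\<lambda>x. (h x * f x)\<^sup>2)"
    proof (rule set_integrable_bound[of _ _ "\<lambda>x. B\<^sup>2 * (f x)\<^sup>2"])
      show "set_integrable lebesgue S (\<lambda>x. B\<^sup>2 * (f x)\<^sup>2)" using assms(1) unfolding L2_def by auto
      show "set_borel_measurable lebesgue S (\<lambda>x. (h x * f x)\<^sup>2)"
        using sbm_mult[OF m m] by (simp add: power2_eq_square)
      show "AE x in lebesgue. x \<in> S \<longrightarrow> norm ((h x * f x)\<^sup>2) \<le> norm (B\<^sup>2 * (f x)\<^sup>2)"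
      proof (intro AE_I2 impI)
        fix x assume "x \<in> S"
        then have "\<bar>h x\<bar> \<le> B" using B by simp
        then have "\<bar>h x\<bar>\<^sup>2 \<le> B\<^sup>2" by (intro power_mono) auto
        then have "\<bar>h x\<bar>\<^sup>2 * (f x)\<^sup>2 \<le> B\<^sup>2 * (f x)\<^sup>2" by (intro mult_right_mono) auto
        then show "norm ((h x * f x)\<^sup>2) \<le> norm (B\<^sup>2 * (f x)\<^sup>2)" by (simp add: power_mult_distrib)
      qed
    qed
  qed
qed

lemma sum_sq_le: "(a + b)\<^sup>2 \<le> 2 * a\<^sup>2 + 2 * (b::real)\<^sup>2"
proof -
  have "0 \<le> (a - b)\<^sup>2" by simp
  then show ?thesis by (simp add: power2_eq_square algebra_simps)
qed

lemma L2vec_diff: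
  fixes g1 g2 :: "'a::euclidean_space \<Rightarrow> 'a"
  assumes "L2vec S g1" "L2vec S g2"
  shows "L2vec S (\<lambda>x. g1 x - g2 x)"
  unfolding L2vec_def
proof
  show m: "set_borel_measurable lebesgue S (\<lambda>x. g1 x - g2 x)"
    using assms unfolding L2vec_def by (intro sbm_diff) auto
  show "set_integrable lebesgue S (\<lambda>x. (norm (g1 x - g2 x))\<^sup>2)"
  proof (rule set_integrable_bound[of _ _ "\<lambda>x. 2 * (norm (g1 x))\<^sup>2 + 2 * (norm (g2 x))\<^sup>2"])
    show "set_integrable lebesgue S (\<lambda>x. 2 * (norm (g1 x))\<^sup>2 + 2 * (norm (g2 x))\<^sup>2)"
      using assms unfolding L2vec_def by (intro set_integral_add(1) set_integrable_mult_right) auto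
    show "set_borel_measurable lebesgue S (\<lambda>x. (norm (g1 x - g2 x))\<^sup>2)" by (rule sbm_normsq[OF m])
    show "AE x in lebesgue. x \<in> S \<longrightarrow> norm ((norm (g1 x - g2 x))\<^sup>2) \<le> norm (2 * (norm (g1 x))\<^sup>2 + 2 * (norm (g2 x))\<^sup>2)"
    proof (intro AE_I2 impI)
      fix x
      have t: "norm (g1 x - g2 x) \<le> norm (g1 x) + norm (g2 x)" by (rule norm_triangle_ineq4)
      have "(norm (g1 x - g2 x))\<^sup>2 \<le> (norm (g1 x) + norm (g2 x))\<^sup>2" using t by (intro power_mono) auto
      also have "\<dots> \<le> 2 * (norm (g1 x))\<^sup>2 + 2 * (norm (g2 x))\<^sup>2"
        by (rule sum_sq_le)
      finally show "norm ((norm (g1 x - g2 x))\<^sup>2) \<le> norm (2 * (norm (g1 x))\<^sup>2 + 2 * (norm (g2 x))\<^sup>2)" by simp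
    qed
  qed
qed

lemma L2vec_cont:
  fixes f :: "'a::euclidean_space \<Rightarrow> 'a"
  assumes "continuous_on UNIV f" "bounded S" "S \<in> lmeasurable"
  shows "L2vec S f"
  unfolding L2vec_def
proof
  obtain B where B: "\<And>x. x \<in> S \<Longrightarrow> norm (f x) \<le> B" using cont_bound[OF assms(1,2)] by blast
  show m: "set_borel_measurable lebesgue S f" using sbm_cont[OF assms(1)] assms(3) by auto
  show "set_integrable lebesgue S (\<lambda>x. (norm (f x))\<^sup>2)"
  proof (rule set_integrable_bound[of _ _ "\<lambda>x. B\<^sup>2"])
    show "set_integrable lebesgue S (\<lambda>x. B\<^sup>2)"
      using assms(3) by (rule absolutely_integrable_on_const)
    show "set_borel_measurable lebesgue S (\<lambda>x. (norm (f x))\<^sup>2)" by (rule sbm_normsq[OF m])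
    show "AE x in lebesgue. x \<in> S \<longrightarrow> norm ((norm (f x))\<^sup>2) \<le> norm (B\<^sup>2)"
    proof (intro AE_I2 impI)
      fix x assume "x \<in> S"
      then have "norm (f x) \<le> B" by (rule B)
      then have "(norm (f x))\<^sup>2 \<le> B\<^sup>2" by (intro power_mono) auto
      then show "norm ((norm (f x))\<^sup>2) \<le> norm (B\<^sup>2)" by simp
    qed
  qed
qed

lemma int_b_inner:
  fixes g1 g2 :: "'a::euclidean_space \<Rightarrow> 'a"
  assumes "L2vec S g1" "L2vec S g2" "set_borel_measurable lebesgue S b" "\<And>x. \<bar>b x\<bar> \<le> B"
  shows "set_integrable lebesgue S (\<lambda>x. b x * (g1 x \<bullet> g2 x))"
proof (rule set_integrable_bound[of _ _ "\<lambda>x. B * ((norm (g1 x))\<^sup>2 + (norm (g2 x))\<^sup>2)"])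
  show "set_integrable lebesgue S (\<lambda>x. B * ((norm (g1 x))\<^sup>2 + (norm (g2 x))\<^sup>2))"
    using assms unfolding L2vec_def by (intro set_integral_add(1) set_integrable_mult_right) auto
  show "set_borel_measurable lebesgue S (\<lambda>x. b x * (g1 x \<bullet> g2 x))"
    using assms unfolding L2vec_def by (intro sbm_mult sbm_inner) auto
  show "AE x in lebesgue. x \<in> S \<longrightarrow> norm (b x * (g1 x \<bullet> g2 x)) \<le> norm (B * ((norm (g1 x))\<^sup>2 + (norm (g2 x))\<^sup>2))"
  proof (intro AE_I2 impI)
    fix x
    have B0: "0 \<le> B" using assms(4)[of x] by linarith
    have "\<bar>g1 x \<bullet> g2 x\<bar> \<le> norm (g1 x) * norm (g2 x)" by (rule Cauchy_Schwarz_ineq2)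
    also have "\<dots> \<le> (norm (g1 x))\<^sup>2 + (norm (g2 x))\<^sup>2" using sq_bound[of "norm (g1 x)" "norm (g2 x)"] by simp
    finally have i: "\<bar>g1 x \<bullet> g2 x\<bar> \<le> (norm (g1 x))\<^sup>2 + (norm (g2 x))\<^sup>2" .
    have "\<bar>b x\<bar> * \<bar>g1 x \<bullet> g2 x\<bar> \<le> B * ((norm (g1 x))\<^sup>2 + (norm (g2 x))\<^sup>2)"
      using assms(4)[of x] i by (intro mult_mono) auto
    then show "norm (b x * (g1 x \<bullet> g2 x)) \<le> norm (B * ((norm (g1 x))\<^sup>2 + (norm (g2 x))\<^sup>2))"
      using B0 by (simp add: abs_mult)
  qed
qed

lemma test_diff: "test_fun S \<psi> \<Longrightarrow> \<psi> differentiable (at x)"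
  unfolding test_fun_def by (metis empty_subsetI list.set(1) pds.simps(1))

lemma test_cont: "test_fun S \<psi> \<Longrightarrow> continuous_on UNIV \<psi>"
  by (meson differentiable_at_imp_differentiable_on differentiable_imp_continuous_on test_diff)

lemma test_pd_diff: "test_fun S \<psi> \<Longrightarrow> i \<in> Basis \<Longrightarrow> pd i \<psi> differentiable (at x)"
  unfolding test_fun_def by (metis empty_subsetI insert_subset list.set(1) list.set(2) pds.simps)

lemma test_pd_cont: "test_fun S \<psi> \<Longrightarrow> i \<in> Basis \<Longrightarrow> continuous_on UNIV (pd i \<psi>)"
  by (meson differentiable_at_imp_differentiable_on differentiable_imp_continuous_on test_pd_diff)

lemma test_cgrad_cont: "test_fun S \<psi> \<Longrightarrow> continuous_on UNIV (cgrad \<psi>)"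
  unfolding cgrad_def by (intro continuous_on_sum continuous_on_scaleR continuous_on_const test_pd_cont) auto

lemma cgrad_inner: assumes "e \<in> Basis" shows "cgrad \<psi> x \<bullet> e = pd e \<psi> x"
proof -
  have "cgrad \<psi> x \<bullet> e = (\<Sum>i\<in>Basis. pd i \<psi> x * (if i = e then 1 else 0))"
    unfolding cgrad_def inner_sum_left by (rule sum.cong) (auto simp: inner_Basis assms)
  also have "\<dots> = (\<Sum>i\<in>Basis. if i = e then pd i \<psi> x else 0)" by (rule sum.cong) auto
  also have "\<dots> = pd e \<psi> x" using assms by simp
  finally show ?thesis .
qed

lemma weak_grad_diff:
  fixes \<Omega> :: "'a::euclidean_space set"
  assumes "H1 \<Omega> u gu" "H1 \<Omega> v gv" "bounded \<Omega>" "\<Omega> \<in> lmeasurable"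
  shows "weak_grad \<Omega> (\<lambda>x. u x - v x) (\<lambda>x. gu x - gv x)"
  unfolding weak_grad_def
proof (intro allI impI ballI)
  fix \<psi> :: "'a \<Rightarrow> real" and i :: 'a assume \<psi>: "test_fun \<Omega> \<psi>" and i: "i \<in> Basis"
  have Om: "\<Omega> \<in> sets lebesgue" using assms(4) by auto
  have Lp: "L2 \<Omega> (pd i \<psi>)" by (rule L2_cont[OF test_pd_cont[OF \<psi> i] assms(3,4)])
  have Lpsi: "L2 \<Omega> \<psi>" by (rule L2_cont[OF test_cont[OF \<psi>] assms(3,4)])
  have Lu: "L2 \<Omega> u" and Lv: "L2 \<Omega> v" and Gu: "L2vec \<Omega> gu" and Gv: "L2vec \<Omega> gv"
    using assms(1,2) unfolding H1_def by auto
  have Lgu: "L2 \<Omega> (\<lambda>x. gu x \<bullet> i)" by (rule L2vec_inner[OF Gu i Om])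
  have Lgv: "L2 \<Omega> (\<lambda>x. gv x \<bullet> i)" by (rule L2vec_inner[OF Gv i Om])
  have wu: "(LINT x:\<Omega>|lebesgue. u x * pd i \<psi> x) = - (LINT x:\<Omega>|lebesgue. (gu x \<bullet> i) * \<psi> x)"
    using assms(1) \<psi> i unfolding H1_def weak_grad_def by blast
  have wv: "(LINT x:\<Omega>|lebesgue. v x * pd i \<psi> x) = - (LINT x:\<Omega>|lebesgue. (gv x \<bullet> i) * \<psi> x)"
    using assms(2) \<psi> i unfolding H1_def weak_grad_def by blast
  have "(LINT x:\<Omega>|lebesgue. (u x - v x) * pd i \<psi> x)
      = (LINT x:\<Omega>|lebesgue. u x * pd i \<psi> x - v x * pd i \<psi> x)"
    by (simp add: left_diff_distrib)
  also have "\<dots> = (LINT x:\<Omega>|lebesgue. u x * pd i \<psi> x) - (LINT x:\<Omega>|lebesgue. v x * pd i \<psi> x)"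
    by (rule set_integral_diff(2)[OF L2_prod_int[OF Lu Lp] L2_prod_int[OF Lv Lp]])
  also have "\<dots> = - ((LINT x:\<Omega>|lebesgue. (gu x \<bullet> i) * \<psi> x) - (LINT x:\<Omega>|lebesgue. (gv x \<bullet> i) * \<psi> x))"
    unfolding wu wv by simp
  also have "(LINT x:\<Omega>|lebesgue. (gu x \<bullet> i) * \<psi> x) - (LINT x:\<Omega>|lebesgue. (gv x \<bullet> i) * \<psi> x)
      = (LINT x:\<Omega>|lebesgue. (gu x \<bullet> i) * \<psi> x - (gv x \<bullet> i) * \<psi> x)"
    by (rule set_integral_diff(2)[symmetric, OF L2_prod_int[OF Lgu Lpsi] L2_prod_int[OF Lgv Lpsi]])
  also have "\<dots> = (LINT x:\<Omega>|lebesgue. ((gu x - gv x) \<bullet> i) * \<psi> x)"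
    by (simp add: inner_diff_left left_diff_distrib)
  finally show "(LINT x:\<Omega>|lebesgue. (u x - v x) * pd i \<psi> x) = - (LINT x:\<Omega>|lebesgue. ((gu x - gv x) \<bullet> i) * \<psi> x)" .
qed

lemma CS_zero:
  assumes "L2 S f" "L2 S g" "(LINT x:S|lebesgue. (g x)\<^sup>2) = 0"
  shows "(LINT x:S|lebesgue. f x * g x) = 0"
proof -
  have "(LINT x:S|lebesgue. f x * g x)\<^sup>2 \<le> 0" using CS[OF assms(1,2)] assms(3) by simp
  then show ?thesis by simp
qed

lemma key:
  fixes \<Omega> :: "'a::euclidean_space set"
  assumes Oo: "open \<Omega>" and Ob: "bounded \<Omega>" and e: "e \<in> Basis"
    and Lw: "L2 \<Omega> w" and Vg: "L2vec \<Omega> gw" and wg: "weak_grad \<Omega> w gw"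
    and z0: "(LINT x:\<Omega>|lebesgue. (gw x \<bullet> e)\<^sup>2) = 0"
    and Hz: "H10 \<Omega> z gz"
  shows "(LINT x:\<Omega>|lebesgue. w x * z x) + (LINT x:\<Omega>|lebesgue. ((x \<bullet> e) * w x) * (gz x \<bullet> e)) = 0"
proof -
  have Om: "\<Omega> \<in> lmeasurable" using lmeasurable_open[OF Ob Oo] .
  have Os: "\<Omega> \<in> sets lebesgue" using Om by auto
  have X: "continuous_on UNIV (\<lambda>x::'a. x \<bullet> e)" by (intro continuous_intros)
  have Lz: "L2 \<Omega> z" and Vgz: "L2vec \<Omega> gz" using Hz unfolding H10_def H1_def by auto
  obtain \<psi>s where \<psi>s: "\<And>n. test_fun \<Omega> (\<psi>s n)"
    and lim: "(\<lambda>n. Vnorm_sq \<Omega> (\<lambda>x. \<psi>s n x - z x) (\<lambda>x. cgrad (\<psi>s n) x - gz x)) \<longlonglongrightarrow> 0"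
    using Hz unfolding H10_def by blast
  define V where "V = (\<lambda>n. Vnorm_sq \<Omega> (\<lambda>x. \<psi>s n x - z x) (\<lambda>x. cgrad (\<psi>s n) x - gz x))"
  define L where "L = (LINT x:\<Omega>|lebesgue. w x * z x) + (LINT x:\<Omega>|lebesgue. ((x \<bullet> e) * w x) * (gz x \<bullet> e))"
  have LXw: "L2 \<Omega> (\<lambda>x. (x \<bullet> e) * w x)" by (rule L2_mult_cont[OF Lw X Ob Os])
  have Lge: "L2 \<Omega> (\<lambda>x. gw x \<bullet> e)" by (rule L2vec_inner[OF Vg e Os])
  have Lgze: "L2 \<Omega> (\<lambda>x. gz x \<bullet> e)" by (rule L2vec_inner[OF Vgz e Os])
  define A where "A = (LINT x:\<Omega>|lebesgue. (w x)\<^sup>2)"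
  define B where "B = (LINT x:\<Omega>|lebesgue. ((x \<bullet> e) * w x)\<^sup>2)"
  have A0: "0 \<le> A" unfolding A_def by (rule set_int_nonneg) simp
  have B0: "0 \<le> B" unfolding B_def by (rule set_int_nonneg) simp
  have bound: "L\<^sup>2 \<le> (2 * A + 2 * B) * V n" for n
  proof -
    define \<psi> where "\<psi> = \<psi>s n"
    have \<psi>t: "test_fun \<Omega> \<psi>" unfolding \<psi>_def by (rule \<psi>s)
    have Lpsi: "L2 \<Omega> \<psi>" by (rule L2_cont[OF test_cont[OF \<psi>t] Ob Om])
    have Lpd: "L2 \<Omega> (pd e \<psi>)" by (rule L2_cont[OF test_pd_cont[OF \<psi>t e] Ob Om])
    have d\<psi>: "\<And>x. \<psi> differentiable (at x)" by (rule test_diff[OF \<psi>t])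
    define \<theta> where "\<theta> = (\<lambda>y. (y \<bullet> e) * \<psi> y)"
    have \<theta>t: "test_fun \<Omega> \<theta>" unfolding \<theta>_def by (rule test_fun_mult[OF \<psi>t])
    have L\<theta>: "L2 \<Omega> \<theta>" unfolding \<theta>_def by (rule L2_mult_cont[OF Lpsi X Ob Os])
    have w\<theta>: "(LINT x:\<Omega>|lebesgue. w x * pd e \<theta> x) = - (LINT x:\<Omega>|lebesgue. (gw x \<bullet> e) * \<theta> x)"
      using wg \<theta>t e unfolding weak_grad_def by blast
    have ee: "e \<bullet> e = 1" using e by (simp add: inner_Basis)
    have pd\<theta>: "pd e \<theta> y = \<psi> y + (y \<bullet> e) * pd e \<psi> y" for y
      unfolding \<theta>_def using pd_mult[OF d\<psi>, of e e y] ee by simp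
    have g\<theta>: "(LINT x:\<Omega>|lebesgue. (gw x \<bullet> e) * \<theta> x) = 0"
      using CS_zero[OF L\<theta> Lge] z0 by (simp add: mult.commute)
    have "(LINT x:\<Omega>|lebesgue. w x * pd e \<theta> x)
        = (LINT x:\<Omega>|lebesgue. w x * \<psi> x + ((x \<bullet> e) * w x) * pd e \<psi> x)"
      unfolding pd\<theta> by (simp add: algebra_simps)
    also have "\<dots> = (LINT x:\<Omega>|lebesgue. w x * \<psi> x) + (LINT x:\<Omega>|lebesgue. ((x \<bullet> e) * w x) * pd e \<psi> x)"
      by (rule set_integral_add(2)[OF L2_prod_int[OF Lw Lpsi] L2_prod_int[OF LXw Lpd]])
    finally have a0: "(LINT x:\<Omega>|lebesgue. w x * \<psi> x) + (LINT x:\<Omega>|lebesgue. ((x \<bullet> e) * w x) * pd e \<psi> x) = 0"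
      using w\<theta> g\<theta> by simp
    define p where "p = (LINT x:\<Omega>|lebesgue. w x * (\<psi> x - z x))"
    define q where "q = (LINT x:\<Omega>|lebesgue. ((x \<bullet> e) * w x) * (pd e \<psi> x - gz x \<bullet> e))"
    have p_eq: "p = (LINT x:\<Omega>|lebesgue. w x * \<psi> x) - (LINT x:\<Omega>|lebesgue. w x * z x)"
      unfolding p_def right_diff_distrib by (rule set_integral_diff(2)[OF L2_prod_int[OF Lw Lpsi] L2_prod_int[OF Lw Lz]])
    have q_eq: "q = (LINT x:\<Omega>|lebesgue. ((x \<bullet> e) * w x) * pd e \<psi> x) - (LINT x:\<Omega>|lebesgue. ((x \<bullet> e) * w x) * (gz x \<bullet> e))"
      unfolding q_def right_diff_distrib by (rule set_integral_diff(2)[OF L2_prod_int[OF LXw Lpd] L2_prod_int[OF LXw Lgze]])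
    have Lp: "L = - (p + q)" using a0 unfolding L_def p_eq q_eq by simp
    have Ld1: "L2 \<Omega> (\<lambda>x. \<psi> x - z x)" by (rule L2_diff[OF Lpsi Lz])
    have Ld2: "L2 \<Omega> (\<lambda>x. pd e \<psi> x - gz x \<bullet> e)" by (rule L2_diff[OF Lpd Lgze])
    have Gd: "L2vec \<Omega> (\<lambda>x. cgrad \<psi> x - gz x)"
      by (rule L2vec_diff[OF L2vec_cont[OF test_cgrad_cont[OF \<psi>t] Ob Om] Vgz])
    define I1 where "I1 = (LINT x:\<Omega>|lebesgue. (\<psi> x - z x)\<^sup>2)"
    define I2 where "I2 = (LINT x:\<Omega>|lebesgue. (norm (cgrad \<psi> x - gz x))\<^sup>2)"
    have VI: "V n = I1 + I2" unfolding V_def I1_def I2_def Vnorm_sq_def \<psi>_def by simp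
    have I10: "0 \<le> I1" unfolding I1_def by (rule set_int_nonneg) simp
    have I20: "0 \<le> I2" unfolding I2_def by (rule set_int_nonneg) simp
    have J: "(LINT x:\<Omega>|lebesgue. (pd e \<psi> x - gz x \<bullet> e)\<^sup>2) \<le> I2"
      unfolding I2_def
    proof (rule set_integral_mono)
      show "set_integrable lebesgue \<Omega> (\<lambda>x. (pd e \<psi> x - gz x \<bullet> e)\<^sup>2)" using Ld2 unfolding L2_def by auto
      show "set_integrable lebesgue \<Omega> (\<lambda>x. (norm (cgrad \<psi> x - gz x))\<^sup>2)" using Gd unfolding L2vec_def by auto
      fix x
      have "pd e \<psi> x - gz x \<bullet> e = (cgrad \<psi> x - gz x) \<bullet> e" by (simp add: inner_diff_left cgrad_inner[OF e])
      moreover have "\<bar>(cgrad \<psi> x - gz x) \<bullet> e\<bar>\<^sup>2 \<le> (norm (cgrad \<psi> x - gz x))\<^sup>2"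
        using Basis_le_norm[OF e, of "cgrad \<psi> x - gz x"] by (intro power_mono) auto
      ultimately show "(pd e \<psi> x - gz x \<bullet> e)\<^sup>2 \<le> (norm (cgrad \<psi> x - gz x))\<^sup>2" by simp
    qed
    have p2: "p\<^sup>2 \<le> A * V n"
    proof -
      have "p\<^sup>2 \<le> A * I1" unfolding p_def A_def I1_def by (rule CS[OF Lw Ld1])
      also have "\<dots> \<le> A * V n" using A0 I20 VI by (intro mult_left_mono) auto
      finally show ?thesis .
    qed
    have q2: "q\<^sup>2 \<le> B * V n"
    proof -
      have "q\<^sup>2 \<le> B * (LINT x:\<Omega>|lebesgue. (pd e \<psi> x - gz x \<bullet> e)\<^sup>2)" unfolding q_def B_def by (rule CS[OF LXw Ld2])
      also have "\<dots> \<le> B * V n" using B0 I10 VI J by (intro mult_left_mono) auto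
      finally show ?thesis .
    qed
    have "L\<^sup>2 = (p + q)\<^sup>2" unfolding Lp by (simp add: power2_eq_square algebra_simps)
    also have "\<dots> \<le> 2 * p\<^sup>2 + 2 * q\<^sup>2" by (rule sum_sq_le)
    also have "\<dots> \<le> (2 * A + 2 * B) * V n" using p2 q2 by (simp add: algebra_simps)
    finally show ?thesis .
  qed
  have "(\<lambda>n. (2 * A + 2 * B) * V n) \<longlonglongrightarrow> 0"
    using lim unfolding V_def by (rule tendsto_mult_right_zero)
  then have "L\<^sup>2 \<le> 0"
    by (rule tendsto_le[OF trivial_limit_sequentially _ tendsto_const]) (use bound in auto)
  then show ?thesis unfolding L_def[symmetric] by simp
qed

lemma poincare:
  fixes \<Omega> :: "'a::euclidean_space set"
  assumes Oo: "open \<Omega>" and Ob: "bounded \<Omega>" and Hu: "H10 \<Omega> u gu" and Hv: "H10 \<Omega> v gv"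
    and G0: "(LINT x:\<Omega>|lebesgue. (norm (gu x - gv x))\<^sup>2) = 0"
  shows "(LINT x:\<Omega>|lebesgue. (u x - v x)\<^sup>2) = 0"
proof -
  obtain e :: 'a where e: "e \<in> Basis" using nonempty_Basis by blast
  have Om: "\<Omega> \<in> lmeasurable" using lmeasurable_open[OF Ob Oo] .
  have Os: "\<Omega> \<in> sets lebesgue" using Om by auto
  have X: "continuous_on UNIV (\<lambda>x::'a. x \<bullet> e)" by (intro continuous_intros)
  have H1u: "H1 \<Omega> u gu" and H1v: "H1 \<Omega> v gv" using Hu Hv unfolding H10_def by auto
  have Lu: "L2 \<Omega> u" and Lv: "L2 \<Omega> v" and Gu: "L2vec \<Omega> gu" and Gv: "L2vec \<Omega> gv"
    using H1u H1v unfolding H1_def by auto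
  have Lw: "L2 \<Omega> (\<lambda>x. u x - v x)" by (rule L2_diff[OF Lu Lv])
  have Gw: "L2vec \<Omega> (\<lambda>x. gu x - gv x)" by (rule L2vec_diff[OF Gu Gv])
  have wg: "weak_grad \<Omega> (\<lambda>x. u x - v x) (\<lambda>x. gu x - gv x)" by (rule weak_grad_diff[OF H1u H1v Ob Om])
  have Lge: "L2 \<Omega> (\<lambda>x. (gu x - gv x) \<bullet> e)" by (rule L2vec_inner[OF Gw e Os])
  have Lgue: "L2 \<Omega> (\<lambda>x. gu x \<bullet> e)" by (rule L2vec_inner[OF Gu e Os])
  have Lgve: "L2 \<Omega> (\<lambda>x. gv x \<bullet> e)" by (rule L2vec_inner[OF Gv e Os])
  have z0: "(LINT x:\<Omega>|lebesgue. ((gu x - gv x) \<bullet> e)\<^sup>2) = 0"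
  proof (rule antisym)
    show "(LINT x:\<Omega>|lebesgue. ((gu x - gv x) \<bullet> e)\<^sup>2) \<le> 0"
      unfolding G0[symmetric]
    proof (rule set_integral_mono)
      show "set_integrable lebesgue \<Omega> (\<lambda>x. ((gu x - gv x) \<bullet> e)\<^sup>2)" using Lge unfolding L2_def by auto
      show "set_integrable lebesgue \<Omega> (\<lambda>x. (norm (gu x - gv x))\<^sup>2)" using Gw unfolding L2vec_def by auto
      fix x
      have "\<bar>(gu x - gv x) \<bullet> e\<bar>\<^sup>2 \<le> (norm (gu x - gv x))\<^sup>2"
        using Basis_le_norm[OF e, of "gu x - gv x"] by (intro power_mono) auto
      then show "((gu x - gv x) \<bullet> e)\<^sup>2 \<le> (norm (gu x - gv x))\<^sup>2" by simp
    qed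
    show "0 \<le> (LINT x:\<Omega>|lebesgue. ((gu x - gv x) \<bullet> e)\<^sup>2)" by (rule set_int_nonneg) simp
  qed
  have Ku: "(LINT x:\<Omega>|lebesgue. (u x - v x) * u x) + (LINT x:\<Omega>|lebesgue. ((x \<bullet> e) * (u x - v x)) * (gu x \<bullet> e)) = 0"
    by (rule key[OF Oo Ob e Lw Gw wg z0 Hu])
  have Kv: "(LINT x:\<Omega>|lebesgue. (u x - v x) * v x) + (LINT x:\<Omega>|lebesgue. ((x \<bullet> e) * (u x - v x)) * (gv x \<bullet> e)) = 0"
    by (rule key[OF Oo Ob e Lw Gw wg z0 Hv])
  have LXw: "L2 \<Omega> (\<lambda>x. (x \<bullet> e) * (u x - v x))" by (rule L2_mult_cont[OF Lw X Ob Os])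
  have c0: "(LINT x:\<Omega>|lebesgue. ((x \<bullet> e) * (u x - v x)) * ((gu x - gv x) \<bullet> e)) = 0"
    by (rule CS_zero[OF LXw Lge z0])
  have e1: "(LINT x:\<Omega>|lebesgue. (u x - v x) * (u x - v x))
      = (LINT x:\<Omega>|lebesgue. (u x - v x) * u x) - (LINT x:\<Omega>|lebesgue. (u x - v x) * v x)"
    unfolding right_diff_distrib[of "u _ - v _" "u _" "v _"]
    by (rule set_integral_diff(2)[OF L2_prod_int[OF Lw Lu] L2_prod_int[OF Lw Lv]])
  have e2: "(LINT x:\<Omega>|lebesgue. ((x \<bullet> e) * (u x - v x)) * ((gu x - gv x) \<bullet> e))
      = (LINT x:\<Omega>|lebesgue. ((x \<bullet> e) * (u x - v x)) * (gu x \<bullet> e)) - (LINT x:\<Omega>|lebesgue. ((x \<bullet> e) * (u x - v x)) * (gv x \<bullet> e))"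
    unfolding inner_diff_left right_diff_distrib[of "(_ \<bullet> e) * (u _ - v _)" "gu _ \<bullet> e" "gv _ \<bullet> e"]
    by (rule set_integral_diff(2)[OF L2_prod_int[OF LXw Lgue] L2_prod_int[OF LXw Lgve]])
  have "(LINT x:\<Omega>|lebesgue. (u x - v x) * (u x - v x)) = 0"
    using e1 e2 c0 Ku Kv by linarith
  then show ?thesis by (simp add: power2_eq_square)
qed

lemma phi_bounds:
  assumes "0 < c0" "c0 < c1"
  shows "0 \<le> phi c0 c1 z" "phi c0 c1 z \<le> 1"
proof -
  have "0 \<le> phi c0 c1 z \<and> phi c0 c1 z \<le> 1"
  proof (cases "z \<le> c0")
    case True
    then have p: "0 < c1 - z" "0 \<le> c0 - z" "c0 - z \<le> c1 - z" using assms by auto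
    then show ?thesis using True unfolding phi_def by (simp add: divide_le_eq_1)
  next
    case False
    then show ?thesis unfolding phi_def by simp
  qed
  then show "0 \<le> phi c0 c1 z" "phi c0 c1 z \<le> 1" by auto
qed

lemma phi_antimono:
  assumes "0 < c0" "c0 < c1" "a \<le> b"
  shows "phi c0 c1 b \<le> phi c0 c1 a"
proof (cases "b \<le> c0")
  case True
  then have a: "a \<le> c0" using assms by simp
  have pa: "0 < c1 - a" and pb: "0 < c1 - b" using assms True by auto
  have "(c0 - a) * (c1 - b) - (c0 - b) * (c1 - a) = (b - a) * (c1 - c0)" by (simp add: algebra_simps)
  moreover have "0 \<le> (b - a) * (c1 - c0)" using assms by simp
  ultimately have "(c0 - b) * (c1 - a) \<le> (c0 - a) * (c1 - b)" by linarith
  then have "(c0 - b) / (c1 - b) \<le> (c0 - a) / (c1 - a)" using pa pb by (simp add: divide_simps)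
  then show ?thesis using True a unfolding phi_def by simp
next
  case False
  then show ?thesis using phi_bounds[OF assms(1,2), of a] unfolding phi_def by simp
qed

lemma phi_mono_prod:
  assumes "0 < c0" "c0 < c1"
  shows "(phi c0 c1 a - phi c0 c1 b) * (a - b) \<le> 0"
proof (cases "a \<le> b")
  case True
  then have "0 \<le> phi c0 c1 a - phi c0 c1 b" using phi_antimono[OF assms True] by simp
  moreover have "a - b \<le> 0" using True by simp
  ultimately show ?thesis by (rule mult_nonneg_nonpos)
next
  case False
  then have "phi c0 c1 a - phi c0 c1 b \<le> 0" using phi_antimono[OF assms, of b a] by simp
  moreover have "0 \<le> a - b" using False by simp
  ultimately show ?thesis by (rule mult_nonpos_nonneg)
qed

lemma phi_meas: "phi c0 c1 \<in> borel_measurable borel"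
  unfolding phi_def by measurable

theorem lemma4p2:
  fixes \<Omega> \<Omega>1 :: "'a::euclidean_space set"
    and b1 b2 c0 c1 :: real
    and u v :: "'a \<Rightarrow> real" and gu gv :: "'a \<Rightarrow> 'a"
  assumes "DIM('a) \<ge> 2"
    and "open \<Omega>" and "connected \<Omega>" and "compact (closure \<Omega>)"
    and "open \<Omega>1" and "connected \<Omega>1" and "\<Omega>1 \<subseteq> \<Omega>"
    and "frontier \<Omega>1 \<subseteq> \<Omega>" and "C2_closed_hypersurface (frontier \<Omega>1)"
    and "b1 > 0" and "b2 > 0" and "0 < c0" and "c0 < c1"
    and "H10 \<Omega> u gu" and "H10 \<Omega> v gv"
  shows "\<exists>\<gamma>>0.
     Ederiv \<Omega> \<Omega>1 (coeff_b \<Omega>1 b1 b2) c0 c1 u gu (\<lambda>x. u x - v x) (\<lambda>x. gu x - gv x)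
   - Ederiv \<Omega> \<Omega>1 (coeff_b \<Omega>1 b1 b2) c0 c1 v gv (\<lambda>x. u x - v x) (\<lambda>x. gu x - gv x)
   \<ge> \<gamma> * Vnorm_sq \<Omega> (\<lambda>x. u x - v x) (\<lambda>x. gu x - gv x)"
proof -
  note Oo = assms(2) and O1o = assms(5) and sub = assms(7)
  have Ob: "bounded \<Omega>"
    using assms(4) by (meson bounded_subset closure_subset compact_imp_bounded)
  have O1b: "bounded \<Omega>1" using Ob sub by (rule bounded_subset)
  have Om: "\<Omega> \<in> lmeasurable" using lmeasurable_open[OF Ob Oo] .
  have Os: "\<Omega> \<in> sets lebesgue" using Om by auto
  have O1m: "\<Omega>1 \<in> lmeasurable" using lmeasurable_open[OF O1b O1o] .
  have O1s: "\<Omega>1 \<in> sets lebesgue" using O1m by auto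
  define b where "b = coeff_b \<Omega>1 b1 b2"
  define m where "m = min b1 b2"
  define M where "M = max b1 b2"
  have m0: "0 < m" unfolding m_def using assms(10,11) by simp
  have bm: "\<And>x. m \<le> b x" unfolding b_def m_def coeff_b_def by simp
  have bM: "\<And>x. \<bar>b x\<bar> \<le> M" unfolding b_def M_def coeff_b_def using assms(10,11) by auto
  have beq: "b = (\<lambda>x. b2 + (b1 - b2) * indicator (closure \<Omega>1) x)"
    unfolding b_def coeff_b_def by (rule ext) (simp add: indicator_def)
  have bmeas: "b \<in> borel_measurable lebesgue"
  proof -
    have "(indicator (closure \<Omega>1) :: 'a \<Rightarrow> real) \<in> borel_measurable lebesgue"
      using closed_leb[OF closed_closure, of \<Omega>1] by (rule borel_measurable_indicator)
    then have "(\<lambda>x. b2 + (b1 - b2) * indicator (closure \<Omega>1) x) \<in> borel_measurable (lebesgue :: 'a measure)"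
      by (intro borel_measurable_add[OF borel_measurable_const] borel_measurable_times[OF borel_measurable_const])
    then show ?thesis unfolding beq .
  qed
  have bs: "set_borel_measurable lebesgue \<Omega> b"
  proof -
    have "(\<lambda>x. indicator \<Omega> x * b x) \<in> borel_measurable lebesgue"
      using Os bmeas by (intro borel_measurable_times) auto
    then show ?thesis unfolding set_borel_measurable_def by simp
  qed
  have H1u: "H1 \<Omega> u gu" and H1v: "H1 \<Omega> v gv" using assms(14,15) unfolding H10_def by auto
  have Lu: "L2 \<Omega> u" and Lv: "L2 \<Omega> v" and Gu: "L2vec \<Omega> gu" and Gv: "L2vec \<Omega> gv"
    using H1u H1v unfolding H1_def by auto
  have Lw: "L2 \<Omega> (\<lambda>x. u x - v x)" by (rule L2_diff[OF Lu Lv])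
  have Gw: "L2vec \<Omega> (\<lambda>x. gu x - gv x)" by (rule L2vec_diff[OF Gu Gv])
  define G where "G = (LINT x:\<Omega>|lebesgue. (norm (gu x - gv x))\<^sup>2)"
  define W where "W = (LINT x:\<Omega>|lebesgue. (u x - v x)\<^sup>2)"
  have G0: "0 \<le> G" unfolding G_def by (rule set_int_nonneg) simp
  have W0: "0 \<le> W" unfolding W_def by (rule set_int_nonneg) simp
  have Vn: "Vnorm_sq \<Omega> (\<lambda>x. u x - v x) (\<lambda>x. gu x - gv x) = W + G"
    unfolding Vnorm_sq_def W_def G_def ..
  have iu: "set_integrable lebesgue \<Omega> (\<lambda>x. b x * (gu x \<bullet> (gu x - gv x)))" by (rule int_b_inner[OF Gu Gw bs bM])
  have iv: "set_integrable lebesgue \<Omega> (\<lambda>x. b x * (gv x \<bullet> (gu x - gv x)))" by (rule int_b_inner[OF Gv Gw bs bM])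
  have iw: "set_integrable lebesgue \<Omega> (\<lambda>x. b x * ((gu x - gv x) \<bullet> (gu x - gv x)))" by (rule int_b_inner[OF Gw Gw bs bM])
  have grad_eq: "(LINT x:\<Omega>|lebesgue. b x * (gu x \<bullet> (gu x - gv x))) - (LINT x:\<Omega>|lebesgue. b x * (gv x \<bullet> (gu x - gv x)))
      = (LINT x:\<Omega>|lebesgue. b x * ((gu x - gv x) \<bullet> (gu x - gv x)))"
  proof -
    have "(LINT x:\<Omega>|lebesgue. b x * (gu x \<bullet> (gu x - gv x))) - (LINT x:\<Omega>|lebesgue. b x * (gv x \<bullet> (gu x - gv x)))
        = (LINT x:\<Omega>|lebesgue. b x * (gu x \<bullet> (gu x - gv x)) - b x * (gv x \<bullet> (gu x - gv x)))"
      by (rule set_integral_diff(2)[symmetric, OF iu iv])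
    also have "\<dots> = (LINT x:\<Omega>|lebesgue. b x * ((gu x - gv x) \<bullet> (gu x - gv x)))"
      by (simp add: inner_diff_left right_diff_distrib)
    finally show ?thesis .
  qed
  have grad_ge: "m * G \<le> (LINT x:\<Omega>|lebesgue. b x * ((gu x - gv x) \<bullet> (gu x - gv x)))"
  proof -
    have "m * G = (LINT x:\<Omega>|lebesgue. m * (norm (gu x - gv x))\<^sup>2)" unfolding G_def by simp
    also have "\<dots> \<le> (LINT x:\<Omega>|lebesgue. b x * ((gu x - gv x) \<bullet> (gu x - gv x)))"
    proof (rule set_integral_mono)
      show "set_integrable lebesgue \<Omega> (\<lambda>x. m * (norm (gu x - gv x))\<^sup>2)"
        using Gw unfolding L2vec_def by auto
      show "set_integrable lebesgue \<Omega> (\<lambda>x. b x * ((gu x - gv x) \<bullet> (gu x - gv x)))" by (rule iw)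
      fix x
      have "m * (norm (gu x - gv x))\<^sup>2 \<le> b x * (norm (gu x - gv x))\<^sup>2"
        using bm[of x] by (intro mult_right_mono) auto
      then show "m * (norm (gu x - gv x))\<^sup>2 \<le> b x * ((gu x - gv x) \<bullet> (gu x - gv x))"
        by (simp add: power2_norm_eq_inner)
    qed
    finally show ?thesis .
  qed
  have Lu1: "L2 \<Omega>1 u" by (rule L2_subset[OF Lu sub O1s])
  have Lv1: "L2 \<Omega>1 v" by (rule L2_subset[OF Lv sub O1s])
  have Lw1: "L2 \<Omega>1 (\<lambda>x. u x - v x)" by (rule L2_subset[OF Lw sub O1s])
  have Lpu: "L2 \<Omega>1 (\<lambda>x. phi c0 c1 (u x))"
    by (rule L2_bdd[OF O1m sbm_comp[OF _ phi_meas O1s], where B=1])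
       (use Lu1 phi_bounds[OF assms(12,13)] in \<open>auto simp: L2_def\<close>)
  have Lpv: "L2 \<Omega>1 (\<lambda>x. phi c0 c1 (v x))"
    by (rule L2_bdd[OF O1m sbm_comp[OF _ phi_meas O1s], where B=1])
       (use Lv1 phi_bounds[OF assms(12,13)] in \<open>auto simp: L2_def\<close>)
  have react: "(LINT x:\<Omega>1|lebesgue. phi c0 c1 (u x) * (u x - v x)) - (LINT x:\<Omega>1|lebesgue. phi c0 c1 (v x) * (u x - v x)) \<le> 0"
  proof -
    have "(LINT x:\<Omega>1|lebesgue. phi c0 c1 (u x) * (u x - v x)) - (LINT x:\<Omega>1|lebesgue. phi c0 c1 (v x) * (u x - v x))
        = (LINT x:\<Omega>1|lebesgue. phi c0 c1 (u x) * (u x - v x) - phi c0 c1 (v x) * (u x - v x))"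
      by (rule set_integral_diff(2)[symmetric, OF L2_prod_int[OF Lpu Lw1] L2_prod_int[OF Lpv Lw1]])
    also have "\<dots> \<le> (LINT x:\<Omega>1|lebesgue. (0::real))"
    proof (rule set_integral_mono)
      show "set_integrable lebesgue \<Omega>1 (\<lambda>x. phi c0 c1 (u x) * (u x - v x) - phi c0 c1 (v x) * (u x - v x))"
        by (rule set_integral_diff(1)[OF L2_prod_int[OF Lpu Lw1] L2_prod_int[OF Lpv Lw1]])
      show "set_integrable lebesgue \<Omega>1 (\<lambda>x. (0::real))" by (simp add: set_integrable_def)
      fix x
      show "phi c0 c1 (u x) * (u x - v x) - phi c0 c1 (v x) * (u x - v x) \<le> 0"
        using phi_mono_prod[OF assms(12,13), of "u x" "v x"] by (simp add: left_diff_distrib)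
    qed
    also have "\<dots> = 0" by simp
    finally show ?thesis .
  qed
  define D where "D = Ederiv \<Omega> \<Omega>1 (coeff_b \<Omega>1 b1 b2) c0 c1 u gu (\<lambda>x. u x - v x) (\<lambda>x. gu x - gv x)
   - Ederiv \<Omega> \<Omega>1 (coeff_b \<Omega>1 b1 b2) c0 c1 v gv (\<lambda>x. u x - v x) (\<lambda>x. gu x - gv x)"
  have DmG: "m * G \<le> D"
    unfolding D_def Ederiv_def b_def[symmetric] using grad_eq grad_ge react by linarith
  show ?thesis
  proof (cases "G = 0")
    case True
    then have "W = 0" unfolding W_def G_def by (rule poincare[OF Oo Ob assms(14,15)])
    then have "1 * Vnorm_sq \<Omega> (\<lambda>x. u x - v x) (\<lambda>x. gu x - gv x) \<le> D" using Vn True DmG by simp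
    then show ?thesis unfolding D_def by (intro exI[of _ 1]) simp
  next
    case False
    then have Gp: "0 < G" using G0 by simp
    have Vp: "0 < W + G" using Gp W0 by simp
    have Dp: "0 < D" using DmG m0 Gp by (smt (verit) mult_pos_pos)
    have "D / (W + G) * Vnorm_sq \<Omega> (\<lambda>x. u x - v x) (\<lambda>x. gu x - gv x) \<le> D" using Vn Vp by simp
    moreover have "0 < D / (W + G)" using Dp Vp by simp
    ultimately show ?thesis unfolding D_def by blast
  qed
qed

end
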